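(* Fix an integer $t\geq 1$ and a real $\alpha$ with $\frac{1}{2}<\alpha<1$. Then, as $m\to\infty$ through values for which $\alpha m$ is an integer, \[ t\cdot \sqrt{\frac{1-\alpha}{8(\alpha m)^3}}\cdot 2^{mH_2(\alpha)}\cdot(1+o(1)) \leq R_t(\alpha m,m)\leq t\cdot 4^{H_2(\alpha)}\cdot 2^{mH_2(\alpha)}\cdot (1+o(1)). \]
   Context: $H_2(x)=-x\log_2 x-(1-x)\log_2(1-x)$ is the binary entropy function. For a $t\times n$ matrix $\mathbf{v}$ over $\mathbb{F}_q$ with rows $\overline{v}_1,\dots,\overline{v}_t$, its $t$-weight is $\mathrm{wt}^{(t)}(\mathbf{v})=\left|\bigcup_{i=1}^t \mathrm{supp}(\overline{v}_i)\right|$, and $d^{(t)}(\mathbf{u},\mathbf{v})=\mathrm{wt}^{(t)}(\mathbf{u}-\mathbf{v})$. For a linear code $C\subseteq\mathbb{F}_q^n$ and $t\in\mathbb{N}$, let $C^t$ be the set of $t\times n$ matrices all of whose rows lie in $C$. The $t$-th generalized covering radius $R_t(C)$ is the smallest integer $\rho$ such that for every $\mathbf{v}\in\mathbb{F}_q^{t\times n}$ there is $\mathbf{c}\in C^t$ with $d^{(t)}(\mathbf{v},\mathbf{c})\leq \rho$. Binary Reed–Muller codes $\mathrm{RM}(r,m)\subseteq\mathbb{F}_2^{2^m}$ ($0\le r\le m$) are defined recursively: $\mathrm{RM}(0,m)=\{\overline{0},\overline{1}\}$, $\mathrm{RM}(m,m)=\mathbb{F}_2^{2^m}$, and for $1\leq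 r\leq m-1$, $\mathrm{RM}(r,m)=\{(\overline{u},\overline{u}+\overline{v}) : \overline{u}\in \mathrm{RM}(r,m-1),\ \overline{v}\in\mathrm{RM}(r-1,m-1)\}$. It is a linear code of length $2^m$ and dimension $\sum_{i=0}^r\binom{m}{i}$. Write $R_t(r,m)=R_t(\mathrm{RM}(r,m))$. *)

theory Defs
  imports "HOL-Analysis.Analysis"
begin

definition H2 :: "real \<Rightarrow> real" where
  "H2 x = - x * log 2 x - (1 - x) * log 2 (1 - x)"

text \<open>Vectors over F_2 are bool lists (True = 1, addition = xor, i.e. (\<noteq>)).\<close>
fun RM :: "nat \<Rightarrow> nat \<Rightarrow> bool list set" where
  "RM 0 m = {replicate (2^m) False, replicate (2^m) True}"
| "RM (Suc r) 0 = {v. length v = 1}"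
| "RM (Suc r) (Suc m) =
     (if Suc m \<le> Suc r then {v. length v = 2^(Suc m)}
      else {u @ map2 (\<noteq>) u v | u v. u \<in> RM (Suc r) m \<and> v \<in> RM r m})"

definition is_matrix :: "nat \<Rightarrow> nat \<Rightarrow> bool list list \<Rightarrow> bool" where
  "is_matrix t n V \<longleftrightarrow> length V = t \<and> (\<forall>v\<in>set V. length v = n)"

definition twt :: "bool list list \<Rightarrow> nat" where
  "twt V = card {j. \<exists>v\<in>set V. j < length v \<and> v ! j}"

definition tdist :: "bool list list \<Rightarrow> bool list list \<Rightarrow> nat" where
  "tdist U V = twt (map2 (map2 (\<noteq>)) U V)"

definition gen_cov_radius :: "nat \<Rightarrow> nat \<Rightarrow> bool list set \<Rightarrow> nat" where
  "gen_cov_radius t n C = (LEAST \<rho>. \<forall>V. is_matrix t n V \<longrightarrow>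
      (\<exists>Cm. is_matrix t n Cm \<and> set Cm \<subseteq> C \<and> tdist V Cm \<le> \<rho>))"

definition R_RM :: "nat \<Rightarrow> nat \<Rightarrow> nat \<Rightarrow> nat" where
  "R_RM t r m = gen_cov_radius t (2^m) (RM r m)"

end

theory Submission
  imports Defs "HOL-Real_Asymp.Real_Asymp"
begin

definition covers :: "nat \<Rightarrow> nat \<Rightarrow> bool list set \<Rightarrow> nat \<Rightarrow> bool" where
  "covers t n C \<rho> \<longleftrightarrow> (\<forall>V. is_matrix t n V \<longrightarrow>
      (\<exists>Cm. is_matrix t n Cm \<and> set Cm \<subseteq> C \<and> tdist V Cm \<le> \<rho>))"

definition tsupp :: "nat \<Rightarrow> nat \<Rightarrow> bool list list \<Rightarrow> bool list list \<Rightarrow> nat set" where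
  "tsupp t n X Y = {j. j < n \<and> (\<exists>i<t. X!i!j \<noteq> Y!i!j)}"

lemma is_matrix_nth: "is_matrix t n V \<Longrightarrow> i < t \<Longrightarrow> length (V!i) = n"
  unfolding is_matrix_def by auto

lemma is_matrix_iff: "is_matrix t n V \<longleftrightarrow> length V = t \<and> (\<forall>i<t. length (V!i) = n)"
  unfolding is_matrix_def by (metis in_set_conv_nth)

lemma set_map2_nth: "length X = length Y \<Longrightarrow> set (map2 f X Y) = (\<lambda>i. f (X!i) (Y!i)) ` {..<length X}"
  by (auto simp: set_zip image_def)

lemma tdist_tsupp:
  assumes "is_matrix t n X" "is_matrix t n Y"
  shows "tdist X Y = card (tsupp t n X Y)"
proof -
  have "{j. \<exists>v\<in>set (map2 (map2 (\<noteq>)) X Y). j < length v \<and> v ! j} = tsupp t n X Y"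
  proof -
    have l: "length X = length Y" "length X = t" using assms unfolding is_matrix_def by auto
    have "{j. \<exists>v\<in>set (map2 (map2 (\<noteq>)) X Y). j < length v \<and> v ! j}
        = {j. \<exists>i<t. j < length (map2 (\<noteq>) (X!i) (Y!i)) \<and> map2 (\<noteq>) (X!i) (Y!i) ! j}"
      unfolding set_map2_nth[OF l(1)] using l by blast
    also have "\<dots> = tsupp t n X Y"
      using assms unfolding tsupp_def by (auto simp: is_matrix_nth)
    finally show ?thesis .
  qed
  then show ?thesis unfolding tdist_def twt_def by simp
qed

lemma RM_len: "v \<in> RM r m \<Longrightarrow> length v = 2^m"
proof (induction r m arbitrary: v rule: RM.induct)
  case (1 m) then show ?case by auto
next
  case (2 r) then show ?case by auto
next
  case (3 r m)
  then show ?case by (auto split: if_splits)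
qed

definition S :: "nat \<Rightarrow> nat \<Rightarrow> nat" where
  "S r m = (\<Sum>i<m-r. m choose i)"

lemma S_le: "S r m \<le> 2^m"
proof -
  have "S r m \<le> (\<Sum>i\<le>m. m choose i)" unfolding S_def
    by (rule sum_mono2) auto
  then show ?thesis by (simp add: choose_row_sum)
qed

lemma S_0: "S 0 m = 2^m - 1"
proof -
  have "(\<Sum>i\<le>m. m choose i) = S 0 m + 1" unfolding S_def
    by (simp add: lessThan_Suc_atMost[symmetric])
  then show ?thesis by (simp add: choose_row_sum)
qed

lemma S_full: "m \<le> r \<Longrightarrow> S r m = 0"
  unfolding S_def by simp

lemma S_pascal:
  assumes "r < m"
  shows "S (Suc r) (Suc m) = S (Suc r) m + S r m"
proof -
  obtain K where K: "m - r = Suc K" using assms by (metis Suc_diff_Suc)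
  have a: "Suc m - Suc r = Suc K" "m - Suc r = K" using K by auto
  have "(\<Sum>i<Suc K. Suc m choose i) = (\<Sum>i<K. m choose i) + (\<Sum>i<Suc K. m choose i)"
  proof (induction K)
    case 0 then show ?case by simp
  next
    case (Suc K)
    then show ?case by simp
  qed
  then show ?thesis unfolding S_def using a K by simp
qed

lemma finite_tsupp: "finite (tsupp t n X Y)"
  unfolding tsupp_def by auto

lemma tsupp_self: "tsupp t n X X = {}"
  unfolding tsupp_def by auto

lemma cover_self:
  assumes "is_matrix t n V" "set V \<subseteq> C"
  shows "\<exists>Cm. is_matrix t n Cm \<and> set Cm \<subseteq> C \<and> tdist V Cm \<le> 0"
  using assms by (intro exI[of _ V]) (simp add: tdist_tsupp tsupp_self)

lemma cover_RM: "covers t (2^m) (RM r m) (S r m)"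
proof (induction r m rule: RM.induct)
  case (1 m)
  show ?case unfolding covers_def
  proof (intro allI impI)
    fix V assume V: "is_matrix t (2^m) V"
    define Cm where "Cm = map (\<lambda>v. replicate (2^m) (v!0)) V"
    have lV: "length V = t" using V unfolding is_matrix_def by auto
    have Cm: "is_matrix t (2^m) Cm" using V unfolding Cm_def is_matrix_def by auto
    have sub: "set Cm \<subseteq> RM 0 m"
    proof
      fix x assume "x \<in> set Cm"
      then obtain v where "x = replicate (2^m) (v!0)" unfolding Cm_def by auto
      then show "x \<in> RM 0 m" by (cases "v!0") auto
    qed
    have "tsupp t (2^m) V Cm \<subseteq> {1..<2^m}"
    proof
      fix j assume "j \<in> tsupp t (2^m) V Cm"
      then obtain i where j: "j < 2^m" "i < t" "V!i!j \<noteq> Cm!i!j" unfolding tsupp_def by auto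
      have "Cm!i!j = V!i!0" using j lV unfolding Cm_def by simp
      with j show "j \<in> {1..<2^m}" by (cases "j = 0") auto
    qed
    then have "card (tsupp t (2^m) V Cm) \<le> card {1..<(2::nat)^m}"
      by (intro card_mono) auto
    then have "card (tsupp t (2^m) V Cm) \<le> 2^m - 1" by simp
    then have "tdist V Cm \<le> S 0 m" using tdist_tsupp[OF V Cm] S_0 by simp
    with Cm sub show "\<exists>Cm. is_matrix t (2 ^ m) Cm \<and> set Cm \<subseteq> RM 0 m \<and> tdist V Cm \<le> S 0 m"
      by blast
  qed
next
  case (2 r)
  show ?case unfolding covers_def
  proof (intro allI impI)
    fix V assume V: "is_matrix t (2^0) V"
    then have "set V \<subseteq> RM (Suc r) 0" unfolding is_matrix_def by auto
    from cover_self[OF V this] show "\<exists>Cm. is_matrix t (2^0) Cm \<and> set Cm \<subseteq> RM (Suc r) 0 \<and> tdist V Cm \<le> S (Suc r) 0"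
      by (simp add: S_full)
  qed
next
  case (3 r m)
  show ?case
  proof (cases "Suc m \<le> Suc r")
    case True
    show ?thesis unfolding covers_def
    proof (intro allI impI)
      fix V assume V: "is_matrix t (2^Suc m) V"
      then have "set V \<subseteq> RM (Suc r) (Suc m)" using True unfolding is_matrix_def by auto
      from cover_self[OF V this] True
      show "\<exists>Cm. is_matrix t (2^Suc m) Cm \<and> set Cm \<subseteq> RM (Suc r) (Suc m) \<and> tdist V Cm \<le> S (Suc r) (Suc m)"
        by (simp add: S_full)
    qed
  next
    case False
    have IH1: "covers t (2^m) (RM (Suc r) m) (S (Suc r) m)" using 3 False by blast
    have IH2: "covers t (2^m) (RM r m) (S r m)" using 3 False by blast
    have RMeq: "RM (Suc r) (Suc m) = {u @ map2 (\<noteq>) u v | u v. u \<in> RM (Suc r) m \<and> v \<in> RM r m}"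
      using False by simp
    show ?thesis unfolding covers_def
    proof (intro allI impI)
      fix V assume V: "is_matrix t (2^Suc m) V"
      define n' where "n' = (2::nat)^m"
      have lV: "length V = t" and lVi: "\<And>i. i < t \<Longrightarrow> length (V!i) = 2*n'"
        using V by (auto simp: is_matrix_iff n'_def)
      define A where "A = map (take n') V"
      define B where "B = map (drop n') V"
      have A: "is_matrix t n' A" using lV lVi by (auto simp: is_matrix_iff A_def)
      have B: "is_matrix t n' B" using lV lVi by (auto simp: is_matrix_iff B_def)
      obtain U where U: "is_matrix t n' U" "set U \<subseteq> RM (Suc r) m" "tdist A U \<le> S (Suc r) m"
        using IH1 A unfolding covers_def n'_def by blast
      define W where "W = map2 (map2 (\<noteq>)) B U"
      have W: "is_matrix t n' W" using B U(1) by (auto simp: is_matrix_iff W_def)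
      obtain Vv where Vv: "is_matrix t n' Vv" "set Vv \<subseteq> RM r m" "tdist W Vv \<le> S r m"
        using IH2 W unfolding covers_def n'_def by blast
      define Cm where "Cm = map2 (\<lambda>u v. u @ map2 (\<noteq>) u v) U Vv"
      have lU: "length U = t" "\<And>i. i < t \<Longrightarrow> length (U!i) = n'" using U(1) by (auto simp: is_matrix_iff)
      have lVv: "length Vv = t" "\<And>i. i < t \<Longrightarrow> length (Vv!i) = n'" using Vv(1) by (auto simp: is_matrix_iff)
      have Cmi: "\<And>i. i < t \<Longrightarrow> Cm!i = U!i @ map2 (\<noteq>) (U!i) (Vv!i)"
        unfolding Cm_def using lU lVv by simp
      have Cm: "is_matrix t (2^Suc m) Cm"
        unfolding is_matrix_iff using lU lVv Cmi by (simp add: Cm_def n'_def)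
      have sub: "set Cm \<subseteq> RM (Suc r) (Suc m)"
      proof
        fix x assume "x \<in> set Cm"
        then obtain i where i: "i < t" "x = Cm!i" using Cm unfolding is_matrix_def by (metis in_set_conv_nth)
        have "U!i \<in> RM (Suc r) m" using U(2) lU i by auto
        moreover have "Vv!i \<in> RM r m" using Vv(2) lVv i by auto
        ultimately show "x \<in> RM (Suc r) (Suc m)" unfolding RMeq using i Cmi by blast
      qed
      have "tsupp t (2^Suc m) V Cm \<subseteq> tsupp t n' A U \<union> (\<lambda>j. j + n') ` tsupp t n' W Vv"
      proof
        fix j assume "j \<in> tsupp t (2^Suc m) V Cm"
        then obtain i where j: "j < 2*n'" "i < t" "V!i!j \<noteq> Cm!i!j" unfolding tsupp_def n'_def by auto
        show "j \<in> tsupp t n' A U \<union> (\<lambda>j. j + n') ` tsupp t n' W Vv"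
        proof (cases "j < n'")
          case True
          have "Cm!i!j = U!i!j" using Cmi[OF j(2)] lU j True by (simp add: nth_append)
          moreover have "A!i!j = V!i!j" using A_def lV j True by simp
          ultimately have "j \<in> tsupp t n' A U" using j True unfolding tsupp_def by auto
          then show ?thesis by blast
        next
          case False
          define j' where "j' = j - n'"
          have jj: "j = j' + n'" "j' < n'" using False j unfolding j'_def by auto
          have "Cm!i!j = (U!i!j' \<noteq> Vv!i!j')" using Cmi[OF j(2)] lU lVv j jj by (simp add: nth_append)
          moreover have "B!i!j' = V!i!j" using B_def lV lVi j jj by (simp add: add.commute)
          moreover have "W!i!j' = (B!i!j' \<noteq> U!i!j')" using W_def lV lU B j jj
            by (simp add: is_matrix_iff)
          ultimately have "W!i!j' \<noteq> Vv!i!j'" using j by auto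
          then have "j' \<in> tsupp t n' W Vv" using jj j unfolding tsupp_def by auto
          then show ?thesis using jj by blast
        qed
      qed
      then have "card (tsupp t (2^Suc m) V Cm) \<le> card (tsupp t n' A U) + card (tsupp t n' W Vv)"
      proof -
        have "card (tsupp t (2^Suc m) V Cm) \<le> card (tsupp t n' A U \<union> (\<lambda>j. j + n') ` tsupp t n' W Vv)"
          by (rule card_mono) (use \<open>tsupp t (2^Suc m) V Cm \<subseteq> _\<close> finite_tsupp in auto)
        also have "\<dots> \<le> card (tsupp t n' A U) + card ((\<lambda>j. j + n') ` tsupp t n' W Vv)"
          by (rule card_Un_le)
        also have "\<dots> \<le> card (tsupp t n' A U) + card (tsupp t n' W Vv)"
          using card_image_le[OF finite_tsupp] by simp
        finally show ?thesis .
      qed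
      also have "\<dots> \<le> S (Suc r) m + S r m"
        using U(3) Vv(3) tdist_tsupp[OF A U(1)] tdist_tsupp[OF W Vv(1)] by simp
      also have "\<dots> = S (Suc r) (Suc m)" using S_pascal False by simp
      finally have "tdist V Cm \<le> S (Suc r) (Suc m)" using tdist_tsupp[OF V Cm] by simp
      with Cm sub show "\<exists>Cm. is_matrix t (2^Suc m) Cm \<and> set Cm \<subseteq> RM (Suc r) (Suc m) \<and> tdist V Cm \<le> S (Suc r) (Suc m)"
        by blast
    qed
  qed
qed

lemma card_lenlists: "card {v::bool list. length v = n} = 2^n"
  using card_lists_length_eq[of "UNIV::bool set" n] by (simp add: card_UNIV_bool)

lemma finite_lenlists: "finite {v::bool list. length v = n}"
  using finite_lists_length_eq[of "UNIV::bool set" n] by simp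

lemma RM_sub: "RM r m \<subseteq> {v. length v = 2^m}"
  using RM_len by blast

lemma finite_RM: "finite (RM r m)"
  using finite_subset[OF RM_sub finite_lenlists] .

lemma app_xor_inj:
  assumes l: "length u1 = n" "length u2 = n" "length v1 = n" "length v2 = n"
    and e: "u1 @ map2 (\<noteq>) u1 v1 = u2 @ map2 (\<noteq>) u2 v2"
  shows "u1 = u2 \<and> v1 = v2"
proof -
  from e l have u: "u1 = u2" and w: "map2 (\<noteq>) u1 v1 = map2 (\<noteq>) u2 v2"
    by (auto simp: append_eq_append_conv)
  have "v1 = v2"
  proof (rule nth_equalityI)
    show "length v1 = length v2" using l by simp
    fix i assume "i < length v1"
    then have "map2 (\<noteq>) u1 v1 ! i = map2 (\<noteq>) u2 v2 ! i" using w by simp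
    then show "v1 ! i = v2 ! i" using l u \<open>i < length v1\<close> by simp (metis (full_types))
  qed
  with u show ?thesis by simp
qed

lemma card_RM: "card (RM r m) = 2^(2^m - S r m)"
proof (induction r m rule: RM.induct)
  case (1 m)
  have "replicate (2^m) False \<noteq> replicate (2^m) True"
    by (metis Zero_not_Suc nth_replicate pos2 zero_less_power Suc_leI le_eq_less_or_eq)
  then have "card (RM 0 m) = 2" by simp
  moreover have "2^m - S 0 m = 1" using S_0[of m] by (simp add: Suc_leI)
  ultimately show ?case by simp
next
  case (2 r)
  show ?case using card_lenlists[of 1] by (simp add: S_full)
next
  case (3 r m)
  show ?case
  proof (cases "Suc m \<le> Suc r")
    case True
    then show ?thesis using card_lenlists[of "2^Suc m"] by (simp add: S_full)
  next
    case False
    have IH1: "card (RM (Suc r) m) = 2^(2^m - S (Suc r) m)" using 3 False by blast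
    have IH2: "card (RM r m) = 2^(2^m - S r m)" using 3 False by blast
    let ?f = "\<lambda>(u::bool list, v::bool list). u @ map2 (\<noteq>) u v"
    have RMeq: "RM (Suc r) (Suc m) = ?f ` (RM (Suc r) m \<times> RM r m)"
      using False by auto
    have inj: "inj_on ?f (RM (Suc r) m \<times> RM r m)"
    proof (rule inj_onI)
      fix x y assume x: "x \<in> RM (Suc r) m \<times> RM r m" and y: "y \<in> RM (Suc r) m \<times> RM r m"
        and e: "?f x = ?f y"
      obtain u1 v1 where xx: "x = (u1, v1)" by (cases x)
      obtain u2 v2 where yy: "y = (u2, v2)" by (cases y)
      have a: "u1 \<in> RM (Suc r) m" "v1 \<in> RM r m" "u2 \<in> RM (Suc r) m" "v2 \<in> RM r m"
        using x y xx yy by auto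
      have "u1 = u2 \<and> v1 = v2"
        by (rule app_xor_inj[OF RM_len[OF a(1)] RM_len[OF a(3)] RM_len[OF a(2)] RM_len[OF a(4)]])
           (use e xx yy in simp)
      then show "x = y" using xx yy by simp
    qed
    have "card (RM (Suc r) (Suc m)) = card (RM (Suc r) m) * card (RM r m)"
      unfolding RMeq card_image[OF inj] card_cartesian_product by simp
    also have "\<dots> = 2^(2^m - S (Suc r) m + (2^m - S r m))" using IH1 IH2 by (simp add: power_add)
    also have "2^m - S (Suc r) m + (2^m - S r m) = 2^Suc m - S (Suc r) (Suc m)"
      using S_le[of "Suc r" m] S_le[of r m] S_pascal[of r m] False by simp
    finally show ?thesis .
  qed
qed

lemma is_matrix_set: "is_matrix t n V \<longleftrightarrow> V \<in> {V. set V \<subseteq> {v. length v = n} \<and> length V = t}"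
  unfolding is_matrix_def by auto

lemma xor_xor: "length a = length c \<Longrightarrow> map2 (\<noteq>) c (map2 (\<noteq>) a c) = a"
  by (rule nth_equalityI) auto

lemma card_AJ:
  "card {v::bool list. length v = n \<and> (\<forall>j<n. v!j \<longrightarrow> j \<in> J)} \<le> 2^(card (J \<inter> {..<n}))"
proof -
  let ?A = "{v::bool list. length v = n \<and> (\<forall>j<n. v!j \<longrightarrow> j \<in> J)}"
  let ?g = "\<lambda>v::bool list. {j. j < n \<and> v!j}"
  have inj: "inj_on ?g ?A"
  proof (rule inj_onI)
    fix x y assume x: "x \<in> ?A" and y: "y \<in> ?A" and e: "?g x = ?g y"
    show "x = y"
    proof (rule nth_equalityI)
      show "length x = length y" using x y by simp
      fix i assume i: "i < length x"
      then have "i < n" using x by simp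
      then show "x!i = y!i" using e by blast
    qed
  qed
  have "?g ` ?A \<subseteq> Pow (J \<inter> {..<n})" by auto
  then have "card (?g ` ?A) \<le> card (Pow (J \<inter> {..<n}))" by (intro card_mono) auto
  moreover have "card (Pow (J \<inter> {..<n})) = 2^card (J \<inter> {..<n})" by (rule card_Pow) simp
  ultimately show ?thesis using card_image[OF inj] by linarith
qed

lemma card_ball:
  assumes n: "n \<ge> 1"
  shows "card {E. is_matrix t n E \<and> twt E \<le> \<rho>} \<le> n^\<rho> * 2^(\<rho>*t)"
proof -
  define \<rho>' where "\<rho>' = min \<rho> n"
  define JJ where "JJ = {J. J \<subseteq> {..<n} \<and> card J = \<rho>'}"
  define AJ where "AJ = (\<lambda>J. {v::bool list. length v = n \<and> (\<forall>j<n. v!j \<longrightarrow> j \<in> J)})"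
  define MJ where "MJ = (\<lambda>J. {E. set E \<subseteq> AJ J \<and> length E = t})"
  have cJJ: "card JJ = n choose \<rho>'" unfolding JJ_def using n_subsets[of "{..<n}" \<rho>'] by simp
  have fJJ: "finite JJ" unfolding JJ_def by (rule finite_subset[of _ "Pow {..<n}"]) auto
  have sub: "{E. is_matrix t n E \<and> twt E \<le> \<rho>} \<subseteq> (\<Union>J\<in>JJ. MJ J)"
  proof
    fix E assume "E \<in> {E. is_matrix t n E \<and> twt E \<le> \<rho>}"
    then have E: "is_matrix t n E" "twt E \<le> \<rho>" by auto
    define X where "X = {j. \<exists>v\<in>set E. j < length v \<and> v ! j}"
    have Xn: "X \<subseteq> {..<n}" using E(1) unfolding X_def is_matrix_def by auto
    have fX: "finite X" using Xn finite_subset by blast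
    have cX: "card X \<le> \<rho>'" using E(2) card_mono[OF _ Xn] unfolding twt_def X_def \<rho>'_def by auto
    have "\<rho>' - card X \<le> card ({..<n} - X)" using card_Diff_subset[OF fX Xn] \<rho>'_def by simp
    then obtain T where T: "T \<subseteq> {..<n} - X" "card T = \<rho>' - card X" "finite T"
      by (rule obtain_subset_with_card_n)
    define J where "J = X \<union> T"
    have "card J = card X + card T" unfolding J_def using T fX by (intro card_Un_disjoint) auto
    then have "card J = \<rho>'" using T cX by simp
    moreover have "J \<subseteq> {..<n}" using Xn T unfolding J_def by auto
    ultimately have "J \<in> JJ" unfolding JJ_def by simp
    moreover have "E \<in> MJ J"
      using E(1) unfolding MJ_def AJ_def J_def X_def is_matrix_def by auto
    ultimately show "E \<in> (\<Union>J\<in>JJ. MJ J)" by blast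
  qed
  have cMJ: "card (MJ J) \<le> 2^(\<rho>*t)" if "J \<in> JJ" for J
  proof -
    have "finite (AJ J)" unfolding AJ_def by (rule finite_subset[OF _ finite_lenlists[of n]]) auto
    then have "card (MJ J) = card (AJ J) ^ t" unfolding MJ_def by (rule card_lists_length_eq)
    also have "\<dots> \<le> (2^(card (J \<inter> {..<n}))) ^ t"
      unfolding AJ_def by (intro power_mono card_AJ) auto
    also have "card (J \<inter> {..<n}) = \<rho>'" using that unfolding JJ_def by (simp add: Int_absorb2)
    also have "((2::nat)^\<rho>') ^ t \<le> 2^(\<rho>*t)"
    proof -
      have "((2::nat)^\<rho>') ^ t = 2^(\<rho>'*t)" by (rule power_mult[symmetric])
      also have "\<dots> \<le> 2^(\<rho>*t)" by (rule power_increasing) (auto simp: \<rho>'_def)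
      finally show ?thesis .
    qed
    finally show ?thesis .
  qed
  have "card {E. is_matrix t n E \<and> twt E \<le> \<rho>} \<le> card (\<Union>J\<in>JJ. MJ J)"
  proof (rule card_mono[OF _ sub])
    have "(\<Union>J\<in>JJ. MJ J) \<subseteq> {V. set V \<subseteq> {v. length v = n} \<and> length V = t}"
      unfolding MJ_def AJ_def by auto
    moreover have "finite {V. set V \<subseteq> {v::bool list. length v = n} \<and> length V = t}"
      by (rule finite_lists_length_eq[OF finite_lenlists])
    ultimately show "finite (\<Union>J\<in>JJ. MJ J)" using finite_subset by blast
  qed
  also have "\<dots> \<le> (\<Sum>J\<in>JJ. card (MJ J))" by (rule card_UN_le[OF fJJ])
  also have "\<dots> \<le> (\<Sum>J\<in>JJ. 2^(\<rho>*t))" by (rule sum_mono) (use cMJ in auto)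
  also have "\<dots> = (n choose \<rho>') * 2^(\<rho>*t)" using cJJ by simp
  also have "\<dots> \<le> n^\<rho> * 2^(\<rho>*t)"
  proof -
    have "n choose \<rho>' \<le> n^\<rho>'" by (rule binomial_le_pow) (simp add: \<rho>'_def)
    also have "n^\<rho>' \<le> n^\<rho>" using n by (intro power_increasing) (auto simp: \<rho>'_def)
    finally show ?thesis by simp
  qed
  finally show ?thesis .
qed

lemma sphere:
  assumes C: "C \<subseteq> {v. length v = n}" and cov: "covers t n C \<rho>" and n: "n \<ge> 1"
  shows "2^(t*n) \<le> card C ^ t * (n^\<rho> * 2^(\<rho>*t))"
proof -
  define M where "M = {V. set V \<subseteq> {v::bool list. length v = n} \<and> length V = t}"
  define Ct where "Ct = {V. set V \<subseteq> C \<and> length V = t}"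
  define B where "B = {E. is_matrix t n E \<and> twt E \<le> \<rho>}"
  have fC: "finite C" using finite_subset[OF C finite_lenlists] .
  have fM: "finite M" unfolding M_def by (rule finite_lists_length_eq[OF finite_lenlists])
  have cM: "card M = 2^(t*n)" unfolding M_def card_lists_length_eq[OF finite_lenlists] card_lenlists
    by (simp add: power_mult[symmetric] mult.commute)
  have fCt: "finite Ct" unfolding Ct_def by (rule finite_lists_length_eq[OF fC])
  have cCt: "card Ct = card C ^ t" unfolding Ct_def by (rule card_lists_length_eq[OF fC])
  have fB: "finite B" using fM unfolding B_def M_def is_matrix_def
    by (rule finite_subset[rotated]) auto
  have "M \<subseteq> (\<lambda>(c, e). map2 (map2 (\<noteq>)) c e) ` (Ct \<times> B)"
  proof
    fix V assume "V \<in> M"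
    then have V: "is_matrix t n V" unfolding M_def is_matrix_def by auto
    then obtain Cm where Cm: "is_matrix t n Cm" "set Cm \<subseteq> C" "tdist V Cm \<le> \<rho>"
      using cov unfolding covers_def by blast
    define E where "E = map2 (map2 (\<noteq>)) V Cm"
    have lV: "length V = t" "\<And>i. i < t \<Longrightarrow> length (V!i) = n" using V by (auto simp: is_matrix_iff)
    have lC: "length Cm = t" "\<And>i. i < t \<Longrightarrow> length (Cm!i) = n" using Cm(1) by (auto simp: is_matrix_iff)
    have E: "is_matrix t n E" unfolding E_def is_matrix_iff using lV lC by simp
    have "twt E \<le> \<rho>" using Cm(3) unfolding E_def tdist_def .
    with E have EB: "E \<in> B" unfolding B_def by simp
    have CmCt: "Cm \<in> Ct" using Cm lC unfolding Ct_def by simp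
    have "map2 (map2 (\<noteq>)) Cm E = V"
    proof (rule nth_equalityI)
      show "length (map2 (map2 (\<noteq>)) Cm E) = length V" using lV lC E_def by simp
      fix i assume "i < length (map2 (map2 (\<noteq>)) Cm E)"
      then have i: "i < t" using lC by simp
      show "map2 (map2 (\<noteq>)) Cm E ! i = V ! i"
        using i lV lC unfolding E_def by (intro nth_equalityI) auto
    qed
    then show "V \<in> (\<lambda>(c, e). map2 (map2 (\<noteq>)) c e) ` (Ct \<times> B)"
      using CmCt EB by force
  qed
  then have "card M \<le> card ((\<lambda>(c, e). map2 (map2 (\<noteq>)) c e) ` (Ct \<times> B))"
    by (intro card_mono finite_imageI finite_cartesian_product fCt fB)
  also have "\<dots> \<le> card (Ct \<times> B)" by (rule card_image_le) (intro finite_cartesian_product fCt fB)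
  also have "\<dots> = card C ^ t * card B" by (simp add: card_cartesian_product cCt)
  also have "\<dots> \<le> card C ^ t * (n^\<rho> * 2^(\<rho>*t))"
    unfolding B_def by (intro mult_le_mono2 card_ball n)
  finally show ?thesis using cM by simp
qed

lemma gcr_eq: "gen_cov_radius t n C = (LEAST \<rho>. covers t n C \<rho>)"
  unfolding gen_cov_radius_def covers_def by simp

lemma R_upper: "R_RM t r m \<le> S r m"
  unfolding R_RM_def gcr_eq by (rule Least_le) (rule cover_RM)

lemma R_lower: "t * S r m \<le> R_RM t r m * (m + t)"
proof -
  define \<rho> where "\<rho> = R_RM t r m"
  have cov: "covers t (2^m) (RM r m) \<rho>"
    unfolding \<rho>_def R_RM_def gcr_eq by (rule LeastI) (rule cover_RM)
  have "2^(t*2^m) \<le> card (RM r m) ^ t * ((2^m)^\<rho> * 2^(\<rho>*t))"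
    by (rule sphere[OF RM_sub cov]) simp
  also have "\<dots> = 2^((2^m - S r m)*t + (m*\<rho> + \<rho>*t))"
    by (simp only: card_RM power_mult[symmetric] power_add)
  finally have "t*2^m \<le> (2^m - S r m)*t + (m*\<rho> + \<rho>*t)"
    by (rule power_le_imp_le_exp[rotated]) simp
  moreover have "t * 2^m = (2^m - S r m)*t + S r m * t"
  proof -
    obtain d where "2^m = S r m + d" using S_le[of r m] le_iff_add by blast
    then have d: "2^m - S r m = d" "t * 2^m = t * S r m + t * d" by (simp_all add: distrib_left)
    show ?thesis unfolding d by (simp add: mult.commute[of d t])
  qed
  ultimately have "S r m * t \<le> m*\<rho> + \<rho>*t" by linarith
  moreover have "\<rho>*(m+t) = m*\<rho> + \<rho>*t" by (simp add: distrib_left mult.commute[of \<rho> m])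
  moreover have "t * S r m = S r m * t" by (rule mult.commute)
  ultimately show ?thesis unfolding \<rho>_def[symmetric] by linarith
qed

lemma asym_tend:
  fixes a b c :: real
  assumes "a > 0" "b > 0"
  shows "((\<lambda>m::nat. exp (-1 - 1/(4*b*real m)) * (a*real m/(a*real m+1)) * (real m/(real m + c))) \<longlongrightarrow> exp (-1)) sequentially"
  using assms by real_asymp

lemma exp_gt: "exp (-1) > 1 / sqrt (8::real)"
proof -
  have "exp 1 < (272/100::real)" by (rule e_less_272)
  also have "(272/100::real) < sqrt 8"
    by (rule real_less_rsqrt) (simp add: power2_eq_square)
  finally have "exp 1 < sqrt 8" .
  then show ?thesis by (simp add: exp_minus field_simps)
qed

definition dfun :: "nat \<Rightarrow> real" where
  "dfun n = ln (fact n) - (real n + 1/2) * ln (real n) + real n"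

lemma dfun_step: "n \<ge> 1 \<Longrightarrow> dfun n - dfun (Suc n) = (real n + 1/2) * (ln (real n + 1) - ln (real n)) - 1"
proof -
  assume n: "n \<ge> 1"
  have "ln (fact (Suc n) :: real) = ln (real n + 1) + ln (fact n)"
    by (simp add: fact_Suc ln_mult add.commute)
  then show ?thesis unfolding dfun_def by (simp add: algebra_simps)
qed

lemma dfun_dec: "n \<ge> 1 \<Longrightarrow> dfun (Suc n) \<le> dfun n"
proof -
  assume n: "n \<ge> 1"
  have "ln (real n + 1) - ln (real n) \<ge> 2 * ((real n + 1) - real n) / (real n + (real n + 1))"
    by (rule ln_inverse_approx_ge) (use n in auto)
  then have "ln (real n + 1) - ln (real n) \<ge> 2 / (2 * real n + 1)" by simp
  then have "(real n + 1/2) * (ln (real n + 1) - ln (real n)) \<ge> (real n + 1/2) * (2 / (2 * real n + 1))"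
    by (intro mult_left_mono) auto
  moreover have "(real n + 1/2) * (2 / (2 * real n + 1)) = 1" using n by (simp add: field_simps)
  ultimately show ?thesis using dfun_step[OF n] by linarith
qed

lemma dfun_inc: "n \<ge> 1 \<Longrightarrow> dfun n - 1/(4*real n) \<le> dfun (Suc n) - 1/(4*real (Suc n))"
proof -
  assume n: "n \<ge> 1"
  have "ln (real n + 1) - ln (real n) \<le> 1 * (inverse (real n) + inverse (real n + 1)) / 2"
    by (rule ln_inverse_approx_le) (use n in auto)
  then have "(real n + 1/2) * (ln (real n + 1) - ln (real n)) \<le> (real n + 1/2) * ((inverse (real n) + inverse (real n + 1)) / 2)"
    by (intro mult_left_mono) auto
  moreover have "(real n + 1/2) * ((inverse (real n) + inverse (real n + 1)) / 2) - 1 = 1/(4*real n) - 1/(4*real (Suc n))"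
    using n by (simp add: divide_simps) (simp add: algebra_simps)
  ultimately show ?thesis using dfun_step[OF n] by linarith
qed

lemma dfun_le1: "n \<ge> 1 \<Longrightarrow> dfun n \<le> 1"
proof (induction n rule: dec_induct)
  case base then show ?case by (simp add: dfun_def)
next
  case (step n) then show ?case using dfun_dec[of n] by simp
qed

lemma dfun_lower: "k \<ge> 1 \<Longrightarrow> k \<le> m \<Longrightarrow> dfun k - 1/(4*real k) \<le> dfun m"
proof -
  assume k: "k \<ge> 1" and km: "k \<le> m"
  have "dfun k - 1/(4*real k) \<le> dfun m - 1/(4*real m)"
    using km
  proof (induction m rule: dec_induct)
    case base then show ?case by simp
  next
    case (step n) then show ?case using dfun_inc[of n] k by simp
  qed
  moreover have "1/(4*real m) \<ge> 0" by simp
  ultimately show ?thesis by linarith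
qed

lemma ln_fact_dfun: "ln (fact n :: real) = dfun n + (real n + 1/2) * ln (real n) - real n"
  unfolding dfun_def by simp

lemma binom_lower:
  assumes k: "k \<ge> 1" and r: "r \<ge> 1" and m: "m = k + r"
  shows "real (m choose k) \<ge> exp (-1 - 1/(4*real k)) * sqrt (real m / (real k * real r))
           * exp (real m * ln (real m) - real k * ln (real k) - real r * ln (real r))"
proof -
  have C: "real (m choose k) = fact m / (fact k * fact r)"
    using binomial_fact[of k m] m by simp
  have pos: "(fact m :: real) > 0" "(fact k :: real) > 0" "(fact r :: real) > 0" by auto
  have lnC: "ln (real (m choose k)) = ln (fact m) - ln (fact k) - ln (fact r)"
    unfolding C using pos by (simp add: ln_div ln_mult)
  have d1: "dfun m \<ge> dfun k - 1/(4*real k)" using dfun_lower[OF k] m by simp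
  have d2: "dfun r \<le> 1" using dfun_le1[OF r] .
  have mm: "real m = real k + real r" using m by simp
  define G where "G = real m * ln (real m) - real k * ln (real k) - real r * ln (real r)"
  define L where "L = (ln (real m) - ln (real k) - ln (real r)) / 2"
  have "ln (real (m choose k)) = dfun m - dfun k - dfun r + G + L"
    unfolding lnC ln_fact_dfun G_def L_def using mm by (simp add: algebra_simps) (simp add: field_simps)
  then have lnge: "ln (real (m choose k)) \<ge> -1 - 1/(4*real k) + G + L" using d1 d2 by linarith
  have Cpos: "real (m choose k) > 0" using m by simp
  have "exp (-1 - 1/(4*real k) + G + L) \<le> real (m choose k)"
    using lnge Cpos by (metis exp_le_cancel_iff exp_ln)
  moreover have "exp L = sqrt (real m / (real k * real r))"
  proof -
    have pos2: "real m / (real k * real r) > 0" using k r m by simp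
    have "ln (real m / (real k * real r)) = ln (real m) - ln (real k) - ln (real r)"
      using k r m by (simp add: ln_div ln_mult)
    then have "exp L = (real m / (real k * real r)) powr (1/2)"
      unfolding L_def powr_def using pos2 k r m by simp
    then show ?thesis by (simp add: powr_half_sqrt)
  qed
  ultimately show ?thesis unfolding G_def[symmetric] by (simp add: exp_add mult.commute mult.left_commute)
qed

lemma H2_id:
  assumes k: "k \<ge> 1" and r: "r \<ge> 1" and m: "m = k + r" and a: "\<alpha> = real r / real m"
  shows "2 powr (real m * H2 \<alpha>) = exp (real m * ln (real m) - real k * ln (real k) - real r * ln (real r))"
proof -
  have mm: "real m = real k + real r" using m by simp
  have mpos: "real m > 0" using m r by simp
  have a1: "1 - \<alpha> = real k / real m" using a mm mpos by (simp add: field_simps)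
  have l1: "log 2 \<alpha> = (ln (real r) - ln (real m)) / ln 2"
    using a r mpos by (simp add: log_def ln_div)
  have l2: "log 2 (1 - \<alpha>) = (ln (real k) - ln (real m)) / ln 2"
    using a1 k mpos by (simp add: log_def ln_div)
  have "real m * H2 \<alpha> * ln 2 = real m * ln (real m) - real k * ln (real k) - real r * ln (real r)"
  proof -
    have "real m * H2 \<alpha> * ln 2 = - (real m * \<alpha>) * (ln (real r) - ln (real m)) - (real m * (1 - \<alpha>)) * (ln (real k) - ln (real m))"
      unfolding H2_def l1 l2 by (simp add: field_simps)
    also have "real m * \<alpha> = real r" using a mpos by simp
    also have "real m * (1 - \<alpha>) = real k" using a1 mpos by simp
    finally show ?thesis using mm by (simp add: algebra_simps)
  qed
  then show ?thesis by (simp add: powr_def mult.commute)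
qed

lemma H2_nonneg: "0 < \<alpha> \<Longrightarrow> \<alpha> < 1 \<Longrightarrow> H2 \<alpha> \<ge> 0"
proof -
  assume a: "0 < \<alpha>" "\<alpha> < 1"
  have "log 2 \<alpha> \<le> 0" "log 2 (1 - \<alpha>) \<le> 0" using a by auto
  then have "\<alpha> * log 2 \<alpha> \<le> 0" "(1 - \<alpha>) * log 2 (1 - \<alpha>) \<le> 0" using a
    by (auto intro!: mult_nonneg_nonpos)
  then show ?thesis unfolding H2_def by simp
qed

lemma S_upper:
  assumes k: "k \<ge> 1" and kr: "k \<le> r" and m: "m = k + r"
  shows "real (S r m) \<le> exp (real m * ln (real m) - real k * ln (real k) - real r * ln (real r))"
proof -
  define a where "a = real r / real m"
  define b where "b = real k / real m"
  have mpos: "real m > 0" using m k by simp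
  have "a + b = (real r + real k) / real m" unfolding a_def b_def by (simp add: add_divide_distrib)
  then have ab: "a + b = 1" using m mpos by simp
  have bpos: "b > 0" "a > 0" unfolding a_def b_def using k kr mpos by auto
  have ba: "b \<le> a" unfolding a_def b_def using kr mpos by (simp add: divide_right_mono)
  have Sdef: "S r m = (\<Sum>i<k. m choose i)" unfolding S_def using m by simp
  have trm: "b^k * a^(m-k) \<le> b^i * a^(m-i)" if "i < k" for i
  proof -
    have "b^k * a^(m-k) = b^i * b^(k-i) * a^(m-k)" using that by (simp add: power_add[symmetric])
    also have "\<dots> \<le> b^i * a^(k-i) * a^(m-k)"
      using bpos ba by (intro mult_right_mono mult_left_mono power_mono) auto
    also have "\<dots> = b^i * a^(m-i)" using that m by (simp add: mult.assoc power_add[symmetric])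
    finally show ?thesis .
  qed
  have "real (S r m) * (b^k * a^(m-k)) = (\<Sum>i<k. real (m choose i) * (b^k * a^(m-k)))"
    unfolding Sdef by (simp add: sum_distrib_right)
  also have "\<dots> \<le> (\<Sum>i<k. real (m choose i) * (b^i * a^(m-i)))"
    by (intro sum_mono mult_left_mono trm) auto
  also have "\<dots> \<le> (\<Sum>i\<le>m. real (m choose i) * (b^i * a^(m-i)))"
    using m by (intro sum_mono2) (auto simp: bpos less_imp_le)
  also have "\<dots> = (b + a)^m" by (simp add: binomial_ring mult.assoc)
  also have "\<dots> = 1" using ab by (simp add: add.commute)
  finally have le1: "real (S r m) * (b^k * a^(m-k)) \<le> 1" .
  have "b^k * a^(m-k) = exp (real k * ln b + real r * ln a)"
    using bpos m by (simp add: exp_add exp_of_nat_mult)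
  also have "real k * ln b + real r * ln a = - (real m * ln (real m) - real k * ln (real k) - real r * ln (real r))"
    unfolding a_def b_def using k m mpos by (simp add: ln_div algebra_simps)
  finally have "b^k * a^(m-k) = exp (- (real m * ln (real m) - real k * ln (real k) - real r * ln (real r)))" .
  then have "b^k * a^(m-k) = inverse (exp (real m * ln (real m) - real k * ln (real k) - real r * ln (real r)))"
    by (simp only: exp_minus)
  with le1 show ?thesis by (simp add: field_simps)
qed

lemma lower_alg:
  fixes k r m t R E Q :: real
  assumes pos: "k > 0" "r > 0" "m > 0" "t \<ge> 0" "E > 0"
    and Q: "exp (-1 - 1/(4*k)) * (r/(r+1)) * (m/(m+t)) > 1 / sqrt 8"
    and h: "R \<ge> t / (m + t) * (k / (r+1)) * (exp (-1 - 1/(4*k)) * sqrt (m / (k*r)) * E)"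
  shows "t * sqrt (k / m / (8 * r^3)) * E \<le> R"
proof -
  define q where "q = exp (-1 - 1/(4*k)) * (r/(r+1)) * (m/(m+t))"
  have eqR: "t / (m + t) * (k / (r+1)) * (exp (-1 - 1/(4*k)) * sqrt (m / (k*r)) * E)
        = t * q * E * ((k/(r*m)) * sqrt (m/(k*r)))"
    unfolding q_def using pos by (simp add: field_simps)
  have sq: "sqrt (k / m / (8 * r^3)) = (1 / sqrt 8) * ((k/(r*m)) * sqrt (m/(k*r)))"
  proof -
    have e: "k / m / (8 * r^3) = (1/8) * ((k/(r*m))^2 * (m/(k*r)))"
      using pos by (simp add: field_simps power2_eq_square power3_eq_cube)
    have "sqrt (k / m / (8 * r^3)) = sqrt (1/8) * (sqrt ((k/(r*m))^2) * sqrt (m/(k*r)))"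
      unfolding e by (simp only: real_sqrt_mult)
    also have "sqrt ((k/(r*m))^2) = k/(r*m)" using pos by simp
    also have "sqrt (1/8::real) = 1 / sqrt 8" by (simp add: real_sqrt_divide)
    finally show ?thesis by simp
  qed
  have nn: "t * E * ((k/(r*m)) * sqrt (m/(k*r))) \<ge> 0" using pos by simp
  have "t * sqrt (k / m / (8 * r^3)) * E = (1 / sqrt 8) * (t * E * ((k/(r*m)) * sqrt (m/(k*r))))"
    unfolding sq by simp
  also have "\<dots> \<le> q * (t * E * ((k/(r*m)) * sqrt (m/(k*r))))"
    using Q nn unfolding q_def by (intro mult_right_mono) auto
  also have "\<dots> = t * q * E * ((k/(r*m)) * sqrt (m/(k*r)))" by simp
  also have "\<dots> \<le> R" using h eqR by simp
  finally show ?thesis .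
qed

theorem theorem16:
  fixes t :: nat and \<alpha> :: real
  assumes "t \<ge> 1" and "1/2 < \<alpha>" and "\<alpha> < 1"
  defines "F \<equiv> inf sequentially (principal {m::nat. \<exists>k::nat. \<alpha> * real m = real k})"
  shows "\<exists>e1 e2 :: nat \<Rightarrow> real. (e1 \<longlongrightarrow> 0) F \<and> (e2 \<longlongrightarrow> 0) F \<and>
    (\<forall>\<^sub>F m in F.
       real t * sqrt ((1 - \<alpha>) / (8 * (\<alpha> * real m) ^ 3)) * 2 powr (real m * H2 \<alpha>) * (1 + e1 m)
         \<le> real (R_RM t (nat \<lfloor>\<alpha> * real m\<rfloor>) m)
     \<and> real (R_RM t (nat \<lfloor>\<alpha> * real m\<rfloor>) m)
         \<le> real t * 4 powr (H2 \<alpha>) * 2 powr (real m * H2 \<alpha>) * (1 + e2 m))"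
proof -
  define \<beta> where "\<beta> = 1 - \<alpha>"
  have a0: "\<alpha> > 0" "\<beta> > 0" "\<beta> < \<alpha>" using assms unfolding \<beta>_def by auto
  have ev1: "eventually (\<lambda>m::nat. exp (-1 - 1/(4*\<beta>*real m)) * (\<alpha>*real m/(\<alpha>*real m+1)) * (real m/(real m + real t)) > 1 / sqrt 8) sequentially"
    by (rule order_tendstoD(1)[OF asym_tend[OF a0(1) a0(2)] exp_gt])
  have ev2: "eventually (\<lambda>m::nat. m \<ge> nat \<lceil>1/\<beta>\<rceil>) sequentially"
    by (rule eventually_ge_at_top)
  have main: "eventually (\<lambda>m. m \<in> {m::nat. \<exists>k::nat. \<alpha> * real m = real k} \<longrightarrow>
       real t * sqrt ((1 - \<alpha>) / (8 * (\<alpha> * real m) ^ 3)) * 2 powr (real m * H2 \<alpha>) * (1 + 0)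
         \<le> real (R_RM t (nat \<lfloor>\<alpha> * real m\<rfloor>) m)
     \<and> real (R_RM t (nat \<lfloor>\<alpha> * real m\<rfloor>) m)
         \<le> real t * 4 powr (H2 \<alpha>) * 2 powr (real m * H2 \<alpha>) * (1 + 0)) sequentially"
    using ev1 ev2
  proof eventually_elim
    case (elim m)
    show ?case
    proof
      assume "m \<in> {m::nat. \<exists>k::nat. \<alpha> * real m = real k}"
      then obtain r :: nat where r: "\<alpha> * real m = real r" by blast
      have rr: "nat \<lfloor>\<alpha> * real m\<rfloor> = r" using r by simp
      have "real m \<ge> 1/\<beta>" using elim(2) by linarith
      then have bm: "\<beta> * real m \<ge> 1" using a0 by (simp add: field_simps)
      have "real r \<le> real m" using r a0 assms(3) by (metis mult_left_le_one_le of_nat_0_le_iff less_imp_le)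
      then have rm: "r \<le> m" by simp
      define k where "k = m - r"
      have kreal: "real k = \<beta> * real m" unfolding k_def \<beta>_def using rm r by (simp add: algebra_simps)
      have k1: "k \<ge> 1" using kreal bm by linarith
      have "\<beta> * real m \<le> \<alpha> * real m" by (rule mult_right_mono) (use a0 in auto)
      then have "real k \<le> real r" using kreal r by simp
      then have kr: "k \<le> r" by simp
      have r1: "r \<ge> 1" using k1 kr by simp
      have m: "m = k + r" unfolding k_def using rm by simp
      have mpos: "real m > 0" using m r1 by simp
      have aeq: "\<alpha> = real r / real m" using r mpos by (simp add: field_simps)
      define G where "G = real m * ln (real m) - real k * ln (real k) - real r * ln (real r)"
      have E: "2 powr (real m * H2 \<alpha>) = exp G" unfolding G_def by (rule H2_id[OF k1 r1 m aeq])
      define R where "R = R_RM t r m"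
      have up: "real R \<le> real t * 4 powr (H2 \<alpha>) * 2 powr (real m * H2 \<alpha>) * (1 + 0)"
      proof -
        have "real R \<le> real (S r m)" unfolding R_def using R_upper by simp
        also have "\<dots> \<le> exp G" unfolding G_def by (rule S_upper[OF k1 kr m])
        also have "\<dots> \<le> real t * 4 powr (H2 \<alpha>) * exp G"
        proof -
          have p4: "1 \<le> (4::real) powr (H2 \<alpha>)"
            by (rule ge_one_powr_ge_zero) (use H2_nonneg[OF a0(1) assms(3)] in auto)
          have t1: "1 \<le> real t" using assms(1) by simp
          have "1 \<le> real t * 4 powr (H2 \<alpha>)"
            using mult_mono[OF t1 p4] by simp
          then show ?thesis by simp
        qed
        finally show ?thesis using E by simp
      qed
      have lo: "real t * sqrt ((1 - \<alpha>) / (8 * (\<alpha> * real m) ^ 3)) * 2 powr (real m * H2 \<alpha>) * (1 + 0) \<le> real R"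
      proof -
        have Q: "exp (-1 - 1/(4*real k)) * (real r/(real r+1)) * (real m/(real m + real t)) > 1 / sqrt 8"
          using elim(1) r kreal by (simp add: mult.assoc)
        have h1: "real t * real (S r m) \<le> real R * (real m + real t)"
          using R_lower[of t r m] unfolding R_def by (metis of_nat_add of_nat_mono of_nat_mult)
        have h2: "real (m choose (k-1)) \<le> real (S r m)"
        proof -
          have "(m choose (k-1)) \<le> S r m" unfolding S_def
            by (rule member_le_sum) (use k1 k_def in auto)
          then show ?thesis by (simp only: of_nat_le_iff)
        qed
        have h3: "real (m choose (k-1)) = real (m choose k) * (real k / (real r + 1))"
        proof -
          obtain k' where k': "k = Suc k'" using k1 by (cases k) auto
          have "Suc k' * (Suc (k' + r) choose Suc k') = Suc r * (Suc (k' + r) choose k')"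
            by (rule Suc_times_binomial_add)
          then have "real k * real (m choose k) = (real r + 1) * real (m choose (k-1))"
            using k' m by (metis of_nat_Suc of_nat_mult add_Suc diff_Suc_1 add.commute)
          then show ?thesis by (simp add: field_simps)
        qed
        have h4: "real (m choose k) \<ge> exp (-1 - 1/(4*real k)) * sqrt (real m / (real k * real r)) * exp G"
          unfolding G_def by (rule binom_lower[OF k1 r1 m])
        have Rge: "real R \<ge> real t / (real m + real t) * (real k / (real r + 1)) * (exp (-1 - 1/(4*real k)) * sqrt (real m / (real k * real r)) * exp G)"
        proof -
          have "real t / (real m + real t) * (real k / (real r + 1)) * (exp (-1 - 1/(4*real k)) * sqrt (real m / (real k * real r)) * exp G)
              \<le> real t / (real m + real t) * (real k / (real r + 1)) * real (m choose k)"
            using h4 by (intro mult_left_mono) auto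
          also have "\<dots> = real t / (real m + real t) * real (m choose (k-1))"
            using h3 by simp
          also have "\<dots> \<le> real t / (real m + real t) * real (S r m)"
            using h2 by (intro mult_left_mono) auto
          also have "\<dots> \<le> real R" using h1 mpos by (simp add: field_simps)
          finally show ?thesis .
        qed
        have "real t * sqrt (real k / real m / (8 * real r^3)) * exp G \<le> real R"
          by (rule lower_alg[OF _ _ mpos _ _ Q Rge]) (use k1 r1 in auto)
        moreover have "(1 - \<alpha>) / (8 * (\<alpha> * real m) ^ 3) = real k / real m / (8 * real r^3)"
        proof -
          have "1 - \<alpha> = real k / real m" using kreal mpos unfolding \<beta>_def by (simp add: field_simps)
          then show ?thesis by (simp only: r)
        qed
        ultimately show ?thesis using E by simp
      qed
      show "real t * sqrt ((1 - \<alpha>) / (8 * (\<alpha> * real m) ^ 3)) * 2 powr (real m * H2 \<alpha>) * (1 + 0)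
         \<le> real (R_RM t (nat \<lfloor>\<alpha> * real m\<rfloor>) m)
     \<and> real (R_RM t (nat \<lfloor>\<alpha> * real m\<rfloor>) m)
         \<le> real t * 4 powr (H2 \<alpha>) * 2 powr (real m * H2 \<alpha>) * (1 + 0)"
        using lo up unfolding rr R_def by simp
    qed
  qed
  show ?thesis
    by (rule exI[of _ "\<lambda>_. 0"], rule exI[of _ "\<lambda>_. 0"])
       (use main in \<open>simp add: F_def eventually_inf_principal\<close>)
qed

end
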